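(* Let $n$, $q\ge2$ be integers and $a\in[1:n]$, $\nu=\lceil(n+1)/a\rceil$. Suppose $\mathbf{l}=(l_1,\dots,l_{q-1})$ and $\mathbf{l}'=(l_1',\dots,l_{q-1}')$ are adjacent elements of $V=\{\mathbf{m}\in[1:\nu]^{q-1}:\sum_im_i\le\frac na+q-1\}$. Then every $\mathbf{t}\in C_{\mathbf{l}}$ and $\mathbf{t}'\in C_{\mathbf{l}'}$ satisfy $d_{\mathrm c}(\mathbf{t},\mathbf{t}')\le\frac a2(2q+1)$.
   Context: $\mathcal{N}_{q,n}=\{\mathbf{t}\in\mathbb{Z}_{\ge0}^q:\sum t_i=n\}$; $C_{\mathbf{l}}=\{\mathbf{t}\in\mathcal{N}_{q,n}:(l_i-1)a\le t_i\le l_ia-1\ \forall i\in[1:q-1]\}$. Two distinct $\mathbf{l},\mathbf{l}'$ are adjacent if either all coordinates agree except one, where they differ by exactly $1$, or all coordinates agree except two indexed by $k,j$, where $l_k=l_k'+1$ and $l_j=l_j'-1$. $d_{\mathrm c}(\mathbf{t},\mathbf{t}')=\frac12\sum_{i=1}^q|t_i-t_i'|$. *)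

theory Defs
  imports Complex_Main
begin

text \<open>Vectors indexed by [1:q] (resp. [1:q-1]) are represented as functions
  nat \<Rightarrow> int; only the values on the index range matter.\<close>

definition simplex_pts :: "nat \<Rightarrow> nat \<Rightarrow> (nat \<Rightarrow> int) set" where
  "simplex_pts q n = {t. (\<forall>i\<in>{1..q}. t i \<ge> 0) \<and> (\<Sum>i=1..q. t i) = int n}"

definition cell :: "nat \<Rightarrow> nat \<Rightarrow> nat \<Rightarrow> (nat \<Rightarrow> int) \<Rightarrow> (nat \<Rightarrow> int) set" where
  "cell q n a l = {t \<in> simplex_pts q n.
      \<forall>i\<in>{1..q-1}. (l i - 1) * int a \<le> t i \<and> t i \<le> l i * int a - 1}"

definition adjacent :: "nat \<Rightarrow> (nat \<Rightarrow> int) \<Rightarrow> (nat \<Rightarrow> int) \<Rightarrow> bool" where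
  "adjacent q l l' \<longleftrightarrow>
     (\<exists>i\<in>{1..q-1}. l i \<noteq> l' i) \<and>
     ((\<exists>k\<in>{1..q-1}. \<bar>l k - l' k\<bar> = 1 \<and> (\<forall>i\<in>{1..q-1}. i \<noteq> k \<longrightarrow> l i = l' i)) \<or>
      (\<exists>k\<in>{1..q-1}. \<exists>j\<in>{1..q-1}. k \<noteq> j \<and> l k = l' k + 1 \<and> l j = l' j - 1 \<and>
          (\<forall>i\<in>{1..q-1}. i \<noteq> k \<and> i \<noteq> j \<longrightarrow> l i = l' i)))"

definition d_c :: "nat \<Rightarrow> (nat \<Rightarrow> int) \<Rightarrow> (nat \<Rightarrow> int) \<Rightarrow> real" where
  "d_c q t t' = (1/2) * (\<Sum>i=1..q. real_of_int \<bar>t i - t' i\<bar>)"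

definition nu :: "nat \<Rightarrow> nat \<Rightarrow> int" where
  "nu n a = \<lceil>(real n + 1) / real a\<rceil>"

definition Vset :: "nat \<Rightarrow> nat \<Rightarrow> nat \<Rightarrow> (nat \<Rightarrow> int) set" where
  "Vset q n a = {m. (\<forall>i\<in>{1..q-1}. 1 \<le> m i \<and> m i \<le> nu n a) \<and>
      real_of_int (\<Sum>i=1..q-1. m i) \<le> real n / real a + real q - 1}"

end

theory Submission
  imports Defs
begin

theorem lemma13:
  fixes n q a :: nat and l l' t t' :: "nat \<Rightarrow> int"
  assumes "q \<ge> 2" and "1 \<le> a" and "a \<le> n"
    and "l \<in> Vset q n a" and "l' \<in> Vset q n a" and "adjacent q l l'"
    and "t \<in> cell q n a l" and "t' \<in> cell q n a l'"
  shows "d_c q t t' \<le> real a / 2 * (2 * real q + 1)"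
proof -
  define S where "S = {1..q-1}"
  define D where "D i = t i - t' i" for i
  define dl where "dl i = l i - l' i" for i
  have fS: "finite S" unfolding S_def by simp
  have qS: "q \<notin> S" unfolding S_def by auto
  have split: "(\<Sum>i=1..q. f i) = (\<Sum>i\<in>S. f i) + f q" for f :: "nat \<Rightarrow> int"
  proof -
    have "{1..q} = insert q S" unfolding S_def using assms(1) by auto
    then show ?thesis using fS qS by (simp add: add.commute)
  qed
  have cS: "card S = q - 1" unfolding S_def by simp
  have key: "\<bar>D i - int a * dl i\<bar> \<le> int a - 1" if "i \<in> S" for i
  proof -
    have "(l i - 1) * int a \<le> t i \<and> t i \<le> l i * int a - 1"
      using assms(7) that unfolding cell_def S_def by auto
    moreover have "(l' i - 1) * int a \<le> t' i \<and> t' i \<le> l' i * int a - 1"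
      using assms(8) that unfolding cell_def S_def by auto
    ultimately show ?thesis unfolding D_def dl_def by (auto simp: algebra_simps)
  qed
  have tsum: "(\<Sum>i=1..q. t i) = int n" "(\<Sum>i=1..q. t' i) = int n"
    using assms(7,8) unfolding cell_def simplex_pts_def by auto
  have Dq: "D q = - (\<Sum>i\<in>S. D i)"
    using tsum split[of t] split[of t'] unfolding D_def by (simp add: sum_subtractf)
  have comb: "(\<Sum>i\<in>S. \<bar>dl i\<bar>) + \<bar>\<Sum>i\<in>S. dl i\<bar> \<le> 2"
  proof -
    have adj: "(\<exists>k\<in>S. \<bar>dl k\<bar> = 1 \<and> (\<forall>i\<in>S. i \<noteq> k \<longrightarrow> dl i = 0)) \<or>
      (\<exists>k\<in>S. \<exists>j\<in>S. k \<noteq> j \<and> dl k = 1 \<and> dl j = -1 \<and> (\<forall>i\<in>S. i \<noteq> k \<and> i \<noteq> j \<longrightarrow> dl i = 0))"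
    proof -
      have "(\<exists>k\<in>{1..q-1}. \<bar>l k - l' k\<bar> = 1 \<and> (\<forall>i\<in>{1..q-1}. i \<noteq> k \<longrightarrow> l i = l' i)) \<or>
      (\<exists>k\<in>{1..q-1}. \<exists>j\<in>{1..q-1}. k \<noteq> j \<and> l k = l' k + 1 \<and> l j = l' j - 1 \<and>
          (\<forall>i\<in>{1..q-1}. i \<noteq> k \<and> i \<noteq> j \<longrightarrow> l i = l' i))"
        using assms(6) unfolding adjacent_def by blast
      then show ?thesis
      proof
        assume "\<exists>k\<in>{1..q-1}. \<bar>l k - l' k\<bar> = 1 \<and> (\<forall>i\<in>{1..q-1}. i \<noteq> k \<longrightarrow> l i = l' i)"
        then have "\<exists>k\<in>S. \<bar>dl k\<bar> = 1 \<and> (\<forall>i\<in>S. i \<noteq> k \<longrightarrow> dl i = 0)"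
          unfolding S_def dl_def by simp
        then show ?thesis by (rule disjI1)
      next
        assume "\<exists>k\<in>{1..q-1}. \<exists>j\<in>{1..q-1}. k \<noteq> j \<and> l k = l' k + 1 \<and> l j = l' j - 1 \<and>
          (\<forall>i\<in>{1..q-1}. i \<noteq> k \<and> i \<noteq> j \<longrightarrow> l i = l' i)"
        then have "\<exists>k\<in>S. \<exists>j\<in>S. k \<noteq> j \<and> dl k = 1 \<and> dl j = -1 \<and> (\<forall>i\<in>S. i \<noteq> k \<and> i \<noteq> j \<longrightarrow> dl i = 0)"
          unfolding S_def dl_def by (simp add: algebra_simps)
        then show ?thesis by (rule disjI2)
      qed
    qed
    then show ?thesis
    proof
      assume "\<exists>k\<in>S. \<bar>dl k\<bar> = 1 \<and> (\<forall>i\<in>S. i \<noteq> k \<longrightarrow> dl i = 0)"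
      then obtain k where k: "k \<in> S" "\<bar>dl k\<bar> = 1" "\<forall>i\<in>S. i \<noteq> k \<longrightarrow> dl i = 0" by blast
      have "(\<Sum>i\<in>S. dl i) = dl k + (\<Sum>i\<in>S-{k}. dl i)" using sum.remove[OF fS k(1)] .
      moreover have "(\<Sum>i\<in>S-{k}. dl i) = 0" using k(3) by (intro sum.neutral) auto
      moreover have "(\<Sum>i\<in>S. \<bar>dl i\<bar>) = \<bar>dl k\<bar> + (\<Sum>i\<in>S-{k}. \<bar>dl i\<bar>)" using sum.remove[OF fS k(1)] .
      moreover have "(\<Sum>i\<in>S-{k}. \<bar>dl i\<bar>) = 0" using k(3) by (intro sum.neutral) auto
      ultimately show ?thesis using k(2) by simp
    next
      assume "\<exists>k\<in>S. \<exists>j\<in>S. k \<noteq> j \<and> dl k = 1 \<and> dl j = -1 \<and> (\<forall>i\<in>S. i \<noteq> k \<and> i \<noteq> j \<longrightarrow> dl i = 0)"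
      then obtain k j where k: "k \<in> S" "j \<in> S" "k \<noteq> j" "dl k = 1" "dl j = -1"
        "\<forall>i\<in>S. i \<noteq> k \<and> i \<noteq> j \<longrightarrow> dl i = 0" by blast
      have fk: "finite (S - {k})" and jk: "j \<in> S - {k}" using fS k by auto
      have "(\<Sum>i\<in>S. g i) = g k + g j + (\<Sum>i\<in>S-{k}-{j}. g i)" for g :: "nat \<Rightarrow> int"
        using sum.remove[OF fS k(1), of g] sum.remove[OF fk jk, of g] by simp
      moreover have "(\<Sum>i\<in>S-{k}-{j}. dl i) = 0" using k(6) by (intro sum.neutral) auto
      moreover have "(\<Sum>i\<in>S-{k}-{j}. \<bar>dl i\<bar>) = 0" using k(6) by (intro sum.neutral) auto
      ultimately show ?thesis using k(4,5) by simp
    qed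
  qed
  have b1: "(\<Sum>i\<in>S. \<bar>D i\<bar>) \<le> (\<Sum>i\<in>S. (int a - 1) + int a * \<bar>dl i\<bar>)"
  proof (rule sum_mono)
    fix i assume "i \<in> S"
    from key[OF this] show "\<bar>D i\<bar> \<le> (int a - 1) + int a * \<bar>dl i\<bar>"
      by (simp add: abs_le_iff abs_mult) (smt (verit) abs_ge_self abs_ge_minus_self mult_left_mono of_nat_0_le_iff mult_minus_right)
  qed
  have b2: "\<bar>\<Sum>i\<in>S. D i\<bar> \<le> (\<Sum>i\<in>S. (int a - 1)) + int a * \<bar>\<Sum>i\<in>S. dl i\<bar>"
  proof -
    have "(\<Sum>i\<in>S. D i) = (\<Sum>i\<in>S. D i - int a * dl i) + int a * (\<Sum>i\<in>S. dl i)"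
      by (simp add: sum_subtractf sum_distrib_left)
    also have "\<bar>\<dots>\<bar> \<le> \<bar>\<Sum>i\<in>S. D i - int a * dl i\<bar> + int a * \<bar>\<Sum>i\<in>S. dl i\<bar>"
      using abs_triangle_ineq[of "\<Sum>i\<in>S. D i - int a * dl i" "int a * (\<Sum>i\<in>S. dl i)"]
      by (simp add: abs_mult)
    also have "\<bar>\<Sum>i\<in>S. D i - int a * dl i\<bar> \<le> (\<Sum>i\<in>S. \<bar>D i - int a * dl i\<bar>)" by (rule sum_abs)
    also have "\<dots> \<le> (\<Sum>i\<in>S. (int a - 1))" using key by (intro sum_mono) auto
    finally show ?thesis by simp
  qed
  have tot: "(\<Sum>i=1..q. \<bar>D i\<bar>) \<le> 2 * (int q - 1) * (int a - 1) + 2 * int a"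
  proof -
    have "(\<Sum>i=1..q. \<bar>D i\<bar>) = (\<Sum>i\<in>S. \<bar>D i\<bar>) + \<bar>\<Sum>i\<in>S. D i\<bar>"
      using split[of "\<lambda>i. \<bar>D i\<bar>"] Dq by simp
    also have "\<dots> \<le> 2 * (\<Sum>i\<in>S. (int a - 1)) + int a * ((\<Sum>i\<in>S. \<bar>dl i\<bar>) + \<bar>\<Sum>i\<in>S. dl i\<bar>)"
    proof -
      have "(\<Sum>i\<in>S. (int a - 1) + int a * \<bar>dl i\<bar>) = (\<Sum>i\<in>S. (int a - 1)) + int a * (\<Sum>i\<in>S. \<bar>dl i\<bar>)"
        by (simp only: sum.distrib sum_distrib_left)
      then show ?thesis using b1 b2 by (simp only: distrib_left)
    qed
    also have "\<dots> \<le> 2 * (\<Sum>i\<in>S. (int a - 1)) + int a * 2"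
      using comb by (intro add_left_mono mult_left_mono) auto
    also have "(\<Sum>i\<in>S. (int a - 1)) = (int q - 1) * (int a - 1)"
      using cS assms(1) by (simp add: of_nat_diff)
    finally show ?thesis by (simp add: algebra_simps)
  qed
  have "d_c q t t' = (1/2) * real_of_int (\<Sum>i=1..q. \<bar>D i\<bar>)"
    unfolding d_c_def D_def by simp
  also have "\<dots> \<le> (1/2) * real_of_int (2 * (int q - 1) * (int a - 1) + 2 * int a)"
  proof -
    have "real_of_int (\<Sum>i=1..q. \<bar>D i\<bar>) \<le> real_of_int (2 * (int q - 1) * (int a - 1) + 2 * int a)"
      using tot by (simp only: of_int_le_iff)
    then show ?thesis by (rule mult_left_mono) simp
  qed
  also have "\<dots> \<le> real a / 2 * (2 * real q + 1)"
  proof -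
    have "2 * (int q - 1) * (int a - 1) + 2 * int a \<le> 2 * int q * int a"
      using assms(1,2) by (simp add: algebra_simps)
    then have "real_of_int (2 * (int q - 1) * (int a - 1) + 2 * int a) \<le> 2 * real q * real a"
      by (metis of_int_le_iff of_int_mult of_int_of_nat_eq of_int_numeral)
    then show ?thesis by (simp add: algebra_simps)
  qed
  finally show ?thesis .
qed

end
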